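(* For every precubical set $X$, the stream realization $\vec{|X|}$ is path-ordered.
   Context: Streams: a circulation on a space $X$ assigns to each open $V\subset X$ a preorder $\leqslant_V$ such that for every collection $\mathcal{O}$ of open sets, $\leqslant_{\bigcup\mathcal{O}}$ is the preorder with smallest graph containing $\bigcup_{V\in\mathcal{O}}\mathrm{graph}(\leqslant_V)$; a stream is a space with a circulation; a stream map $f:X\to Y$ is continuous with $f(x)\leqslant_V f(y)$ whenever $x\leqslant_{f^{-1}V}y$. Streams form a cocomplete category, colimits being computed on underlying spaces with the final circulation. $\vec\square[1]$ is $[0,1]$ with circulation $x\leqslant_V y$ iff $x\le y$ and $[x,y]\subset V$; a dipath on $X$ is a stream map $\vec\square[1]\to X$. $X$ is path-ordered if whenever $V\subset X$ is open and $x\leqslant_V y$ there is a dipath from $x$ to $y$ with image in $V$. $\square$ is the smallest subcategory of posets and monotone maps closed under cartesian products (unit $\{0\}$) containing $\delta_\pm:\{0\}\to\{0<1\}$; a precubical set is a functor $X:\square^{op}\to\mathbf{Set}$, $X_n=X([1]^n)$. $\vec\square[n]$ is the $n$-fold product of $\vec\square[1]$ in streams, $\square$-morphisms extend linearly to stream maps, and the stream realization is the coend $\vec{|X|}=\int^{[1]^n}X_n\cdot\vec\square[n]$ in streams. *)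

theory Defs
  imports "HOL-Analysis.Analysis"
begin

type_synonym 'a circ = "'a set \<Rightarrow> ('a \<times> 'a) set"
type_synonym 'a stream = "'a topology \<times> 'a circ"

text \<open>A circulation on the space T: to each open V a preorder on V (given by its graph),
  such that for every collection O of open sets the preorder on the union is the smallest
  preorder (on the union) whose graph contains the union of the graphs.\<close>
definition is_circulation :: "'a topology \<Rightarrow> 'a circ \<Rightarrow> bool" where
  "is_circulation T C \<longleftrightarrow>
     (\<forall>V. openin T V \<longrightarrow> C V \<subseteq> V \<times> V \<and> (\<forall>x\<in>V. (x, x) \<in> C V) \<and> trans (C V)) \<and>
     (\<forall>Os. (\<forall>V\<in>Os. openin T V) \<longrightarrow>
          C (\<Union>Os) = Id_on (\<Union>Os) \<union> (\<Union>V\<in>Os. C V)\<^sup>+)"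

definition is_stream :: "'a stream \<Rightarrow> bool" where
  "is_stream S \<longleftrightarrow> is_circulation (fst S) (snd S)"

definition stream_map :: "'a stream \<Rightarrow> 'b stream \<Rightarrow> ('a \<Rightarrow> 'b) \<Rightarrow> bool" where
  "stream_map S S' f \<longleftrightarrow>
     continuous_map (fst S) (fst S') f \<and>
     (\<forall>V. openin (fst S') V \<longrightarrow>
        (\<forall>x y. (x, y) \<in> snd S (topspace (fst S) \<inter> f -` V) \<longrightarrow> (f x, f y) \<in> snd S' V))"

definition box1 :: "real stream" where
  "box1 = (top_of_set {0..1}, (\<lambda>V. {(x, y). x \<le> y \<and> {x..y} \<subseteq> V}))"

definition path_ordered :: "'a stream \<Rightarrow> bool" where
  "path_ordered S \<longleftrightarrow>
     (\<forall>V x y. openin (fst S) V \<and> (x, y) \<in> snd S V \<longrightarrow>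
        (\<exists>\<gamma>. stream_map box1 S \<gamma> \<and> \<gamma> 0 = x \<and> \<gamma> 1 = y \<and> \<gamma> ` {0..1} \<subseteq> V))"

text \<open>[0,1]^n, represented inside nat => real (coordinates >= n are 0), with the
  product topology.\<close>
definition cube :: "nat \<Rightarrow> (nat \<Rightarrow> real) set" where
  "cube n = {t. (\<forall>i<n. 0 \<le> t i \<and> t i \<le> 1) \<and> (\<forall>i\<ge>n. t i = 0)}"

definition cube_top :: "nat \<Rightarrow> (nat \<Rightarrow> real) topology" where
  "cube_top n = subtopology (powertop_real UNIV) (cube n)"

text \<open>The n-fold product of box1 in streams: the product space carrying the initial
  (i.e. largest) circulation making all coordinate projections stream maps into box1.\<close>
definition boxn :: "nat \<Rightarrow> (nat \<Rightarrow> real) stream" where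
  "boxn n = (cube_top n,
     (\<lambda>V. if openin (cube_top n) V then
            \<Union>{C V | C. is_circulation (cube_top n) C \<and>
                       (\<forall>i<n. stream_map (cube_top n, C) box1 (\<lambda>t. t i))}
          else {}))"

text \<open>[1]^n is represented by boolean lists of length n; a monotone map [1]^m -> [1]^n
  by a function on boolean lists, normalised to be [] outside lists of length m.\<close>
definition norm_fun :: "nat \<Rightarrow> (bool list \<Rightarrow> bool list) \<Rightarrow> bool list \<Rightarrow> bool list" where
  "norm_fun m f = (\<lambda>v. if length v = m then f v else [])"

text \<open>The smallest subcategory of posets closed under cartesian products (unit [1]^0)
  containing delta_minus, delta_plus (and hence the objects [1]^n and their identities).\<close>
inductive cube_mor :: "nat \<Rightarrow> nat \<Rightarrow> (bool list \<Rightarrow> bool list) \<Rightarrow> bool" where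
  unit: "cube_mor 0 0 (norm_fun 0 (\<lambda>v. []))"
| ident: "cube_mor 1 1 (norm_fun 1 id)"
| dminus: "cube_mor 0 1 (norm_fun 0 (\<lambda>v. [False]))"
| dplus: "cube_mor 0 1 (norm_fun 0 (\<lambda>v. [True]))"
| comp: "cube_mor l m f \<Longrightarrow> cube_mor m n g \<Longrightarrow> cube_mor l n (norm_fun l (g \<circ> f))"
| prod: "cube_mor m n f \<Longrightarrow> cube_mor m' n' g \<Longrightarrow>
     cube_mor (m + m') (n + n') (norm_fun (m + m') (\<lambda>v. f (take m v) @ g (drop m v)))"

definition precubical ::
    "(nat \<Rightarrow> 'a set) \<Rightarrow> (nat \<Rightarrow> nat \<Rightarrow> (bool list \<Rightarrow> bool list) \<Rightarrow> 'a \<Rightarrow> 'a) \<Rightarrow> bool" where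
  "precubical X act \<longleftrightarrow>
     (\<forall>m n f x. cube_mor m n f \<and> x \<in> X n \<longrightarrow> act m n f x \<in> X m) \<and>
     (\<forall>n x. x \<in> X n \<longrightarrow> act n n (norm_fun n id) x = x) \<and>
     (\<forall>l m n f g x. cube_mor l m f \<and> cube_mor m n g \<and> x \<in> X n \<longrightarrow>
        act l n (norm_fun l (g \<circ> f)) x = act l m f (act m n g x))"

text \<open>Multilinear extension of a map [1]^m -> [1]^n to [0,1]^m -> [0,1]^n.\<close>
definition lin_ext :: "nat \<Rightarrow> nat \<Rightarrow> (bool list \<Rightarrow> bool list) \<Rightarrow> (nat \<Rightarrow> real) \<Rightarrow> nat \<Rightarrow> real" where
  "lin_ext m n f t = (\<lambda>j. if j < n then
      (\<Sum>v\<in>{v::bool list. length v = m}.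
          (\<Prod>i<m. if v ! i then t i else 1 - t i) * (if f v ! j then 1 else 0))
    else 0)"

definition cells_top :: "(nat \<Rightarrow> 'a set) \<Rightarrow> ((nat \<times> 'a) \<times> (nat \<Rightarrow> real)) topology" where
  "cells_top X = sum_topology (\<lambda>(n, x). cube_top n) {(n, x). x \<in> X n}"

text \<open>The coend identifications (act f x, t) ~ (x, |f| t), as an equivalence relation.\<close>
definition real_gen ::
    "(nat \<Rightarrow> 'a set) \<Rightarrow> (nat \<Rightarrow> nat \<Rightarrow> (bool list \<Rightarrow> bool list) \<Rightarrow> 'a \<Rightarrow> 'a) \<Rightarrow>
     (((nat \<times> 'a) \<times> (nat \<Rightarrow> real)) \<times> ((nat \<times> 'a) \<times> (nat \<Rightarrow> real))) set" where
  "real_gen X act = {(((m, act m n f x), t), ((n, x), lin_ext m n f t)) | m n f x t.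
       cube_mor m n f \<and> x \<in> X n \<and> t \<in> cube m}"

definition real_rel where
  "real_rel X act = Id_on (topspace (cells_top X)) \<union> (real_gen X act \<union> (real_gen X act)\<inverse>)\<^sup>+"

definition real_top ::
    "(nat \<Rightarrow> 'a set) \<Rightarrow> (nat \<Rightarrow> nat \<Rightarrow> (bool list \<Rightarrow> bool list) \<Rightarrow> 'a \<Rightarrow> 'a) \<Rightarrow>
     ((nat \<times> 'a) \<times> (nat \<Rightarrow> real)) set topology" where
  "real_top X act = topology (\<lambda>U.
      U \<subseteq> topspace (cells_top X) // real_rel X act \<and>
      openin (cells_top X) {p \<in> topspace (cells_top X). real_rel X act `` {p} \<in> U})"

definition char_map where
  "char_map X act n x = (\<lambda>t. real_rel X act `` {((n, x), t)})"

text \<open>Stream realization: quotient space with the final (smallest) circulation making all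
  characteristic maps from the directed cubes stream maps.\<close>
definition stream_realization ::
    "(nat \<Rightarrow> 'a set) \<Rightarrow> (nat \<Rightarrow> nat \<Rightarrow> (bool list \<Rightarrow> bool list) \<Rightarrow> 'a \<Rightarrow> 'a) \<Rightarrow>
     ((nat \<times> 'a) \<times> (nat \<Rightarrow> real)) set stream" where
  "stream_realization X act = (real_top X act,
     (\<lambda>V. if openin (real_top X act) V then
            \<Inter>{C V | C. is_circulation (real_top X act) C \<and>
                 (\<forall>n x. x \<in> X n \<longrightarrow> stream_map (boxn n) (real_top X act, C) (char_map X act n x))}
          else {}))"

end

theory Submission
  imports Defs
begin


definition segH :: "(real \<Rightarrow> 'b) set \<Rightarrow> 'b set \<Rightarrow> ('b \<times> 'b) set" where
  "segH S V = {(p 0, p 1) | p. p \<in> S \<and> p ` {0..1} \<subseteq> V}"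

definition segC :: "(real \<Rightarrow> 'b) set \<Rightarrow> 'b set \<Rightarrow> ('b \<times> 'b) set" where
  "segC S V = Id_on V \<union> (segH S V)\<^sup>+"

lemma segH_sub: "segH S V \<subseteq> V \<times> V"
  unfolding segH_def by force

lemma segH_mono: "V \<subseteq> W \<Longrightarrow> segH S V \<subseteq> segH S W"
  unfolding segH_def by blast

lemma segC_mono: "V \<subseteq> W \<Longrightarrow> segC S V \<subseteq> segC S W"
  unfolding segC_def using segH_mono[of V W S] trancl_mono by blast

lemma segC_sub: "segC S V \<subseteq> V \<times> V"
  unfolding segC_def using segH_sub[of S V] trancl_subset_Sigma[of "segH S V" V] by auto

lemma segC_trans: "trans (segC S V)"
proof -
  have s: "(segH S V)\<^sup>+ \<subseteq> V \<times> V"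
    using segH_sub[of S V] trancl_subset_Sigma[of "segH S V" V] by auto
  show ?thesis unfolding trans_def segC_def
    using s by (auto intro: trancl_trans)
qed

lemma lebesgue_chain:
  fixes T :: "'b topology" and p :: "real \<Rightarrow> 'b"
  assumes cont: "continuous_map (top_of_set {0..1}) T p"
    and opn: "\<And>W. W \<in> Os \<Longrightarrow> openin T W"
    and cov: "p ` {0..1} \<subseteq> \<Union>Os"
  obtains N :: nat where "N > 0"
    "\<And>k. k < N \<Longrightarrow> \<exists>W\<in>Os. (\<lambda>r. p (real k / N + r * (real (Suc k) / N - real k / N))) ` {0..1} \<subseteq> W"
proof -
  define G where "G = {U. open U \<and> (\<exists>W\<in>Os. {0..1} \<inter> U = {r\<in>{0..1}. p r \<in> W})}"
  have "{0..1::real} \<subseteq> \<Union>G"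
  proof
    fix r :: real assume r: "r \<in> {0..1}"
    then obtain W where W: "W \<in> Os" "p r \<in> W" using cov by blast
    have "openin (top_of_set {0..1}) {x \<in> topspace (top_of_set {0..1}). p x \<in> W}"
      using openin_continuous_map_preimage[OF cont opn[OF W(1)]] by simp
    then obtain U where "open U" "{x \<in> {0..1}. p x \<in> W} = {0..1} \<inter> U"
      by (auto simp: openin_open)
    then show "r \<in> \<Union>G" using W r unfolding G_def by blast
  qed
  moreover have "\<And>U. U \<in> G \<Longrightarrow> open U" unfolding G_def by blast
  ultimately obtain e where e: "0 < e" "\<And>x. x \<in> {0..1} \<Longrightarrow> \<exists>G\<in>G. ball x e \<subseteq> G"
    using Heine_Borel_lemma[OF compact_Icc] by metis
  obtain N :: nat where N: "1 / e < N" using reals_Archimedean2 by blast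
  have Npos: "N > 0" using N e(2) \<open>0 < e\<close>
    by (metis divide_pos_pos gr0I of_nat_0 order_less_asym zero_less_one)
  have inv: "1 / real N < e" using N e(1) Npos
    by (simp add: divide_less_eq mult.commute)
  show ?thesis
  proof (rule that[OF Npos])
    fix k assume k: "k < N"
    let ?a = "real k / N" and ?b = "real (Suc k) / N"
    have a01: "?a \<in> {0..1}" using k by auto
    obtain U where U: "U \<in> G" "ball ?a e \<subseteq> U" using e(2)[OF a01] by blast
    then obtain W where W: "W \<in> Os" "{0..1} \<inter> U = {r\<in>{0..1}. p r \<in> W}" unfolding G_def by blast
    have "(\<lambda>r. p (?a + r * (?b - ?a))) ` {0..1} \<subseteq> W"
    proof
      fix y assume "y \<in> (\<lambda>r. p (?a + r * (?b - ?a))) ` {0..1}"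
      then obtain r where r: "r \<in> {0..1}" "y = p (?a + r * (?b - ?a))" by blast
      have ba: "?b - ?a = 1 / N" by (simp add: add_divide_distrib)
      have x0: "0 \<le> ?a + r * (?b - ?a)" using r unfolding ba by simp
      have "r * (1 / N) \<le> 1 / N" using r by (simp add: divide_le_eq)
      hence x1: "?a + r * (?b - ?a) \<le> ?b" unfolding ba by (simp add: add_divide_distrib)
      have "?b \<le> 1" using k by simp
      hence xin: "?a + r * (?b - ?a) \<in> {0..1}" using x0 x1 by simp
      have "dist ?a (?a + r * (?b - ?a)) < e"
        using r inv ba \<open>r * (1 / N) \<le> 1 / N\<close> by (simp add: dist_real_def)
      hence "?a + r * (?b - ?a) \<in> U" using U(2) by auto
      thus "y \<in> W" using W(2) xin r by blast
    qed
    thus "\<exists>W\<in>Os. (\<lambda>r. p (?a + r * (?b - ?a))) ` {0..1} \<subseteq> W" using W by blast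
  qed
qed

lemma seg_chain:
  fixes T :: "'b topology"
  assumes cont: "\<And>p. p \<in> S \<Longrightarrow> continuous_map (top_of_set {0..1}) T p"
    and restr: "\<And>p a b. p \<in> S \<Longrightarrow> 0 \<le> a \<Longrightarrow> a \<le> b \<Longrightarrow> b \<le> 1 \<Longrightarrow> (\<lambda>r. p (a + r*(b-a))) \<in> S"
    and pS: "p \<in> S"
    and opn: "\<And>W. W \<in> Os \<Longrightarrow> openin T W"
    and cov: "p ` {0..1} \<subseteq> \<Union>Os"
  shows "(p 0, p 1) \<in> (\<Union>W\<in>Os. segH S W)\<^sup>+"
proof -
  obtain N :: nat where N: "N > 0"
    "\<And>k. k < N \<Longrightarrow> \<exists>W\<in>Os. (\<lambda>r. p (real k / N + r * (real (Suc k) / N - real k / N))) ` {0..1} \<subseteq> W"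
    using lebesgue_chain[OF cont[OF pS] opn cov] by metis
  let ?R = "\<Union>W\<in>Os. segH S W"
  have step: "(p (real k / N), p (real (Suc k) / N)) \<in> ?R" if k: "k < N" for k
  proof -
    obtain W where W: "W \<in> Os" "(\<lambda>r. p (real k / N + r * (real (Suc k) / N - real k / N))) ` {0..1} \<subseteq> W"
      using N(2)[OF k] by blast
    have le: "real k / N \<le> real (Suc k) / N" by (simp add: divide_right_mono)
    have le1: "real (Suc k) / N \<le> 1" using k by simp
    have inS: "(\<lambda>r. p (real k / N + r * (real (Suc k) / N - real k / N))) \<in> S"
      using restr[OF pS _ le le1] by simp
    have "(p (real k / N), p (real (Suc k) / N)) \<in> segH S W"
      unfolding segH_def
      by (rule CollectI, rule exI[where x="\<lambda>r. p (real k / N + r * (real (Suc k) / N - real k / N))"])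
         (use inS W(2) in simp)
    thus ?thesis using W(1) by blast
  qed
  have "\<forall>k. Suc k \<le> N \<longrightarrow> (p 0, p (real (Suc k) / N)) \<in> ?R\<^sup>+"
  proof
    fix k show "Suc k \<le> N \<longrightarrow> (p 0, p (real (Suc k) / N)) \<in> ?R\<^sup>+"
    proof (induction k)
      case 0
      show ?case using step[of 0] N(1) by auto
    next
      case (Suc k)
      show ?case
      proof
        assume "Suc (Suc k) \<le> N"
        hence "(p 0, p (real (Suc k) / N)) \<in> ?R\<^sup>+" "(p (real (Suc k) / N), p (real (Suc (Suc k)) / N)) \<in> ?R"
          using Suc step[of "Suc k"] by auto
        thus "(p 0, p (real (Suc (Suc k)) / N)) \<in> ?R\<^sup>+" by (rule trancl_into_trancl)
      qed
    qed
  qed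
  moreover obtain k where "N = Suc k" using N(1) gr0_implies_Suc by blast
  ultimately have "(p 0, p (real N / N)) \<in> ?R\<^sup>+" by blast
  moreover have "real N / N = 1" using N(1) by simp
  ultimately show ?thesis by simp
qed

lemma segC_circ:
  fixes T :: "'b topology"
  assumes cont: "\<And>p. p \<in> S \<Longrightarrow> continuous_map (top_of_set {0..1}) T p"
    and restr: "\<And>p a b. p \<in> S \<Longrightarrow> 0 \<le> a \<Longrightarrow> a \<le> b \<Longrightarrow> b \<le> 1 \<Longrightarrow> (\<lambda>r. p (a + r*(b-a))) \<in> S"
  shows "is_circulation T (segC S)"
proof -
  have A: "segC S V \<subseteq> V \<times> V \<and> (\<forall>x\<in>V. (x, x) \<in> segC S V) \<and> trans (segC S V)" for V
  proof (intro conjI)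
    show "segC S V \<subseteq> V \<times> V" by (rule segC_sub)
    show "\<forall>x\<in>V. (x, x) \<in> segC S V" unfolding segC_def by blast
    show "trans (segC S V)" by (rule segC_trans)
  qed
  have B: "segC S (\<Union>Os) = Id_on (\<Union>Os) \<union> (\<Union>V\<in>Os. segC S V)\<^sup>+" if opn: "\<forall>V\<in>Os. openin T V" for Os
  proof
    let ?R = "\<Union>V\<in>Os. segC S V"
    have "?R \<subseteq> segC S (\<Union>Os)"
    proof
      fix z assume "z \<in> ?R"
      then obtain V where "V \<in> Os" "z \<in> segC S V" by blast
      moreover have "V \<subseteq> \<Union>Os" using \<open>V \<in> Os\<close> by blast
      ultimately show "z \<in> segC S (\<Union>Os)" using segC_mono[of V "\<Union>Os" S] by blast
    qed
    hence "?R\<^sup>+ \<subseteq> (segC S (\<Union>Os))\<^sup>+" by (rule trancl_mono_subset)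
    also have "\<dots> = segC S (\<Union>Os)" by (rule trancl_id[OF segC_trans])
    finally have 1: "?R\<^sup>+ \<subseteq> segC S (\<Union>Os)" .
    have 2: "Id_on (\<Union>Os) \<subseteq> segC S (\<Union>Os)" unfolding segC_def by blast
    show "Id_on (\<Union>Os) \<union> ?R\<^sup>+ \<subseteq> segC S (\<Union>Os)" using 1 2 by (simp only: Un_least)
  next
    let ?R = "\<Union>V\<in>Os. segC S V"
    have "segH S (\<Union>Os) \<subseteq> ?R\<^sup>+"
    proof
      fix z assume "z \<in> segH S (\<Union>Os)"
      hence "\<exists>p. z = (p 0, p 1) \<and> p \<in> S \<and> p ` {0..1} \<subseteq> \<Union>Os"
        unfolding segH_def by simp
      then obtain p where p: "z = (p 0, p 1)" "p \<in> S" "p ` {0..1} \<subseteq> \<Union>Os"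
        by blast
      have "(p 0, p 1) \<in> (\<Union>W\<in>Os. segH S W)\<^sup>+"
        proof (rule seg_chain[OF cont restr p(2) _ p(3)])
          fix W assume "W \<in> Os" thus "openin T W" using opn by blast
        qed
      moreover have "(\<Union>W\<in>Os. segH S W) \<subseteq> ?R"
      proof
        fix y assume "y \<in> (\<Union>W\<in>Os. segH S W)"
        then obtain W where W: "W \<in> Os" "y \<in> segH S W" by blast
        hence "y \<in> segC S W" unfolding segC_def by (simp add: r_into_trancl')
        thus "y \<in> ?R" using W(1) by blast
      qed
      ultimately have "(p 0, p 1) \<in> ?R\<^sup>+" by (rule trancl_mono)
      thus "z \<in> ?R\<^sup>+" using p(1) by simp
    qed
    hence "(segH S (\<Union>Os))\<^sup>+ \<subseteq> (?R\<^sup>+)\<^sup>+" by (rule trancl_mono_subset)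
    hence 3: "(segH S (\<Union>Os))\<^sup>+ \<subseteq> ?R\<^sup>+" by simp
    show "segC S (\<Union>Os) \<subseteq> Id_on (\<Union>Os) \<union> ?R\<^sup>+" unfolding segC_def[of S "\<Union>Os"] by (rule Un_mono[OF subset_refl 3])
  qed
  show ?thesis unfolding is_circulation_def
  proof (intro conjI allI impI)
    fix V assume "openin T V"
    show "segC S V \<subseteq> V \<times> V" using A[of V] by (rule conjunct1)
    show "\<forall>x\<in>V. (x, x) \<in> segC S V" using A[of V] by simp
    show "trans (segC S V)" using A[of V] by simp
  next
    fix Os :: "'b set set" assume "\<forall>V\<in>Os. openin T V"
    thus "segC S (\<Union>Os) = Id_on (\<Union>Os) \<union> (\<Union>V\<in>Os. segC S V)\<^sup>+" by (rule B)
  qed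
qed



definition seg :: "(nat \<Rightarrow> real) \<Rightarrow> (nat \<Rightarrow> real) \<Rightarrow> real \<Rightarrow> nat \<Rightarrow> real" where
  "seg u w r = (\<lambda>i. u i + r * (w i - u i))"

definition Scube :: "nat \<Rightarrow> (real \<Rightarrow> nat \<Rightarrow> real) set" where
  "Scube n = {seg u w | u w. u \<in> cube n \<and> w \<in> cube n \<and> (\<forall>i<n. u i \<le> w i)}"

lemma topspace_cube_top [simp]: "topspace (cube_top n) = cube n"
  unfolding cube_top_def by simp

lemma seg_0 [simp]: "seg u w 0 = u" and seg_1 [simp]: "seg u w 1 = w"
  unfolding seg_def by auto

lemma seg_in_cube:
  assumes "u \<in> cube n" "w \<in> cube n" "0 \<le> r" "r \<le> 1"
  shows "seg u w r \<in> cube n"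
proof -
  have "0 \<le> u i + r * (w i - u i) \<and> u i + r * (w i - u i) \<le> 1" if i: "i < n" for i
  proof -
    have u: "0 \<le> u i" "u i \<le> 1" and w: "0 \<le> w i" "w i \<le> 1" using assms(1,2) i unfolding cube_def by auto
    have e: "u i + r * (w i - u i) = (1 - r) * u i + r * w i" by (simp add: algebra_simps)
    have "0 \<le> (1 - r) * u i" "0 \<le> r * w i" using u w assms(3,4) by auto
    moreover have "(1 - r) * u i \<le> (1 - r)" "r * w i \<le> r"
      using u w assms(3,4) by (auto simp: mult_left_le)
    ultimately show ?thesis unfolding e by linarith
  qed
  moreover have "\<forall>i\<ge>n. u i + r * (w i - u i) = 0" using assms(1,2) unfolding cube_def by auto
  ultimately show ?thesis unfolding seg_def cube_def by auto
qed

lemma seg_restr: "seg u w (a + r * (b - a)) = seg (seg u w a) (seg u w b) r"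
  unfolding seg_def by (rule ext) (simp add: algebra_simps)

lemma seg_mono:
  assumes "u i \<le> w i" "a \<le> b"
  shows "seg u w a i \<le> seg u w b i"
  unfolding seg_def using assms by (simp add: mult_right_mono)

lemma seg_cont:
  assumes "u \<in> cube n" "w \<in> cube n"
  shows "continuous_map (top_of_set {0..1}) (cube_top n) (seg u w)"
  unfolding cube_top_def continuous_map_in_subtopology
proof
  show "continuous_map (top_of_set {0..1}) (powertop_real UNIV) (seg u w)"
    unfolding continuous_map_componentwise_UNIV seg_def
    by (simp add: continuous_intros)
  show "seg u w \<in> topspace (top_of_set {0..1}) \<rightarrow> cube n"
    using seg_in_cube[OF assms] by auto
qed

lemma Scube_cont: "p \<in> Scube n \<Longrightarrow> continuous_map (top_of_set {0..1}) (cube_top n) p"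
  unfolding Scube_def using seg_cont by blast

lemma Scube_restr:
  assumes "p \<in> Scube n" "0 \<le> a" "a \<le> b" "b \<le> 1"
  shows "(\<lambda>r. p (a + r * (b - a))) \<in> Scube n"
proof -
  obtain u w where p: "p = seg u w" "u \<in> cube n" "w \<in> cube n" "\<forall>i<n. u i \<le> w i"
    using assms(1) unfolding Scube_def by blast
  have "(\<lambda>r. p (a + r * (b - a))) = seg (seg u w a) (seg u w b)"
    unfolding p(1) seg_restr by (rule ext) simp
  moreover have "seg u w a \<in> cube n" "seg u w b \<in> cube n"
    using seg_in_cube[OF p(2,3)] assms by auto
  moreover have "\<forall>i<n. seg u w a i \<le> seg u w b i" using seg_mono p(4) assms(3) by blast
  ultimately show ?thesis unfolding Scube_def by blast
qed

lemma cube_circ: "is_circulation (cube_top n) (segC (Scube n))"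
  by (rule segC_circ[OF Scube_cont Scube_restr])

lemma proj_stream:
  assumes i: "i < n"
  shows "stream_map (cube_top n, segC (Scube n)) box1 (\<lambda>t. t i)"
  unfolding stream_map_def fst_conv snd_conv box1_def
proof (intro conjI allI impI)
  show "continuous_map (cube_top n) (top_of_set {0..1}) (\<lambda>t. t i)"
    unfolding continuous_map_in_subtopology
  proof
    show "continuous_map (cube_top n) euclideanreal (\<lambda>t. t i)"
      unfolding cube_top_def by (rule continuous_map_from_subtopology[OF continuous_map_product_projection]) simp
    show "(\<lambda>t. t i) \<in> topspace (cube_top n) \<rightarrow> {0..1}" using i by (auto simp: cube_def)
  qed
next
  fix V x y
  assume V: "openin (top_of_set {0..1}) V"
    and xy: "(x, y) \<in> segC (Scube n) (topspace (cube_top n) \<inter> (\<lambda>t. t i) -` V)"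
  define Q where "Q = topspace (cube_top n) \<inter> (\<lambda>t. t i) -` V"
  define Rel where "Rel = {(x, y). x i \<le> y i \<and> {x i..y i} \<subseteq> V}"
  have tr: "trans Rel" unfolding trans_def
  proof (intro allI impI)
    fix a b c :: "nat \<Rightarrow> real" assume "(a, b) \<in> Rel" "(b, c) \<in> Rel"
    hence h: "a i \<le> b i" "{a i..b i} \<subseteq> V" "b i \<le> c i" "{b i..c i} \<subseteq> V" unfolding Rel_def by auto
    have "{a i..c i} \<subseteq> {a i..b i} \<union> {b i..c i}" by auto
    thus "(a, c) \<in> Rel" using h unfolding Rel_def by auto
  qed
  have H: "segH (Scube n) Q \<subseteq> Rel"
  proof
    fix z assume "z \<in> segH (Scube n) Q"
    hence "\<exists>p. z = (p 0, p 1) \<and> p \<in> Scube n \<and> p ` {0..1} \<subseteq> Q" unfolding segH_def by simp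
    then obtain p where p: "z = (p 0, p 1)" "p \<in> Scube n" "p ` {0..1} \<subseteq> Q" by blast
    then obtain u w where uw: "p = seg u w" "u \<in> cube n" "w \<in> cube n" "\<forall>i<n. u i \<le> w i"
      unfolding Scube_def by blast
    have le: "u i \<le> w i" using uw(4) i by blast
    have "r \<in> V" if r: "u i \<le> r" "r \<le> w i" for r
    proof (cases "u i = w i")
      case True
      hence "r = seg u w 0 i" using r by simp
      moreover have "seg u w 0 \<in> Q" using p(3) uw(1) by (metis atLeastAtMost_iff image_subset_iff order_refl zero_le_one)
      ultimately show ?thesis unfolding Q_def by auto
    next
      case False
      define th where "th = (r - u i) / (w i - u i)"
      have pos: "w i - u i > 0" using le False by simp
      have th01: "0 \<le> th" "th \<le> 1" unfolding th_def using r pos by (auto simp: divide_le_eq)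
      have "seg u w th i = r" unfolding seg_def th_def using pos by simp
      moreover have "seg u w th \<in> Q" using p(3) uw(1) th01 by (metis atLeastAtMost_iff image_subset_iff)
      ultimately show ?thesis unfolding Q_def by auto
    qed
    thus "z \<in> Rel" unfolding Rel_def p(1) uw(1) using le by auto
  qed
  have "(segH (Scube n) Q)\<^sup>+ \<subseteq> Rel\<^sup>+" using H by (rule trancl_mono_subset)
  also have "\<dots> = Rel" using tr by (rule trancl_id)
  finally have T: "(segH (Scube n) Q)\<^sup>+ \<subseteq> Rel" .
  have I: "Id_on Q \<subseteq> Rel" unfolding Rel_def Q_def by auto
  have "(x, y) \<in> Rel" using xy T I unfolding Q_def[symmetric] segC_def by blast
  thus "(x i, y i) \<in> {(x, y). x \<le> y \<and> {x..y} \<subseteq> V}" unfolding Rel_def by simp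
qed

lemma boxn_contains:
  assumes "openin (cube_top n) P"
  shows "segC (Scube n) P \<subseteq> snd (boxn n) P"
proof
  fix z assume "z \<in> segC (Scube n) P"
  thus "z \<in> snd (boxn n) P"
    unfolding boxn_def snd_conv using assms cube_circ[of n] proj_stream[of _ n] by auto
qed



lemma istop_quot:
  "istopology (\<lambda>U. U \<subseteq> Q \<and> openin CT {p \<in> topspace CT. f p \<in> U})"
  unfolding istopology_def
proof (rule conjI; intro allI impI)
  fix S T assume S: "S \<subseteq> Q \<and> openin CT {p \<in> topspace CT. f p \<in> S}"
    and T: "T \<subseteq> Q \<and> openin CT {p \<in> topspace CT. f p \<in> T}"
  have e: "{p \<in> topspace CT. f p \<in> S \<inter> T} = {p \<in> topspace CT. f p \<in> S} \<inter> {p \<in> topspace CT. f p \<in> T}"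
    by auto
  show "S \<inter> T \<subseteq> Q \<and> openin CT {p \<in> topspace CT. f p \<in> S \<inter> T}"
    using S T unfolding e by auto
next
  fix K assume K: "\<forall>S\<in>K. S \<subseteq> Q \<and> openin CT {p \<in> topspace CT. f p \<in> S}"
  have e: "{p \<in> topspace CT. f p \<in> \<Union>K} = (\<Union>S\<in>K. {p \<in> topspace CT. f p \<in> S})" by auto
  show "\<Union>K \<subseteq> Q \<and> openin CT {p \<in> topspace CT. f p \<in> \<Union>K}"
    using K unfolding e by (auto intro!: openin_Union)
qed

lemma openin_real_top:
  "openin (real_top X act) U \<longleftrightarrow>
     U \<subseteq> topspace (cells_top X) // real_rel X act \<and>
     openin (cells_top X) {p \<in> topspace (cells_top X). real_rel X act `` {p} \<in> U}"
  unfolding real_top_def by (subst topology_inverse'[OF istop_quot]) (rule refl)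

lemma class_in_topspace:
  assumes "p \<in> topspace (cells_top X)"
  shows "real_rel X act `` {p} \<in> topspace (real_top X act)"
proof -
  let ?Q = "topspace (cells_top X) // real_rel X act"
  have "openin (real_top X act) ?Q"
    unfolding openin_real_top
  proof
    have "{p \<in> topspace (cells_top X). real_rel X act `` {p} \<in> ?Q} = topspace (cells_top X)"
      proof (rule set_eqI)
        fix p show "p \<in> {p \<in> topspace (cells_top X). real_rel X act `` {p} \<in> ?Q} \<longleftrightarrow> p \<in> topspace (cells_top X)"
          using quotientI[of p "topspace (cells_top X)" "real_rel X act"] by blast
      qed
    thus "openin (cells_top X) {p \<in> topspace (cells_top X). real_rel X act `` {p} \<in> ?Q}" by simp
  qed simp
  hence "?Q \<subseteq> topspace (real_top X act)" by (rule openin_subset)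
  moreover have "real_rel X act `` {p} \<in> ?Q" using assms by (rule quotientI)
  ultimately show ?thesis by blast
qed

lemma topspace_cells: "((n, x), t) \<in> topspace (cells_top X) \<longleftrightarrow> x \<in> X n \<and> t \<in> cube n"
  unfolding cells_top_def by simp

lemma char_cont:
  assumes x: "x \<in> X n"
  shows "continuous_map (cube_top n) (real_top X act) (char_map X act n x)"
  unfolding continuous_map_def
proof (intro conjI allI impI)
  show "char_map X act n x \<in> topspace (cube_top n) \<rightarrow> topspace (real_top X act)"
    unfolding char_map_def using x by (auto intro!: class_in_topspace simp: topspace_cells)
next
  fix U assume U: "openin (real_top X act) U"
  define A where "A = {p \<in> topspace (cells_top X). real_rel X act `` {p} \<in> U}"
  have "openin (cells_top X) A" using U unfolding openin_real_top A_def by blast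
  hence "openin ((\<lambda>(n, x). cube_top n) (n, x)) {y. ((n, x), y) \<in> A}"
    unfolding cells_top_def openin_sum_topology using x by blast
  moreover have "{y. ((n, x), y) \<in> A} = {t \<in> topspace (cube_top n). char_map X act n x t \<in> U}"
    unfolding A_def char_map_def using x by (auto simp: topspace_cells)
  ultimately show "openin (cube_top n) {t \<in> topspace (cube_top n). char_map X act n x t \<in> U}" by simp
qed

definition SR :: "(nat \<Rightarrow> 'a set) \<Rightarrow> (nat \<Rightarrow> nat \<Rightarrow> (bool list \<Rightarrow> bool list) \<Rightarrow> 'a \<Rightarrow> 'a) \<Rightarrow>
     (real \<Rightarrow> ((nat \<times> 'a) \<times> (nat \<Rightarrow> real)) set) set" where
  "SR X act = {char_map X act n x \<circ> seg u w | n x u w.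
      x \<in> X n \<and> u \<in> cube n \<and> w \<in> cube n \<and> (\<forall>i<n. u i \<le> w i)}"

lemma SR_cont:
  assumes "p \<in> SR X act"
  shows "continuous_map (top_of_set {0..1}) (real_top X act) p"
proof -
  obtain n x u w where p: "p = char_map X act n x \<circ> seg u w" "x \<in> X n" "u \<in> cube n" "w \<in> cube n"
    using assms unfolding SR_def by blast
  show ?thesis unfolding p(1) by (rule continuous_map_compose[OF seg_cont[OF p(3,4)] char_cont[of x X n act, OF p(2)]])
qed

lemma SR_restr:
  assumes "p \<in> SR X act" "0 \<le> a" "a \<le> b" "b \<le> 1"
  shows "(\<lambda>r. p (a + r * (b - a))) \<in> SR X act"
proof -
  obtain n x u w where p: "p = char_map X act n x \<circ> seg u w" "x \<in> X n" "u \<in> cube n" "w \<in> cube n" "\<forall>i<n. u i \<le> w i"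
    using assms(1) unfolding SR_def by blast
  have "(\<lambda>r. p (a + r * (b - a))) = char_map X act n x \<circ> seg (seg u w a) (seg u w b)"
    unfolding p(1) by (rule ext) (simp add: seg_restr)
  moreover have "seg u w a \<in> cube n" "seg u w b \<in> cube n"
    using seg_in_cube[OF p(3,4)] assms by auto
  moreover have "\<forall>i<n. seg u w a i \<le> seg u w b i" using seg_mono p(5) assms(3) by blast
  ultimately show ?thesis unfolding SR_def using p(2) by blast
qed

lemma real_circ: "is_circulation (real_top X act) (segC (SR X act))"
  by (rule segC_circ[OF SR_cont SR_restr])



lemma circ_mono:
  assumes C: "is_circulation T C" and A: "openin T A" and B: "openin T B" and BA: "B \<subseteq> A"
  shows "C B \<subseteq> C A"
proof -
  have "\<forall>V\<in>{B, A}. openin T V" using A B by simp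
  hence "C (\<Union>{B, A}) = Id_on (\<Union>{B, A}) \<union> (\<Union>V\<in>{B, A}. C V)\<^sup>+"
    using C unfolding is_circulation_def by blast
  moreover have "\<Union>{B, A} = A" using BA by blast
  ultimately have e: "C A = Id_on A \<union> (\<Union>V\<in>{B, A}. C V)\<^sup>+" by simp
  show ?thesis
  proof
    fix z assume "z \<in> C B"
    hence "z \<in> (\<Union>V\<in>{B, A}. C V)" by blast
    hence "z \<in> (\<Union>V\<in>{B, A}. C V)\<^sup>+" by (rule r_into_trancl')
    thus "z \<in> C A" using e by blast
  qed
qed

lemma abs_conv:
  fixes x y c e r :: real
  assumes "\<bar>x - c\<bar> < e" "\<bar>y - c\<bar> < e" "0 \<le> r" "r \<le> 1"
  shows "\<bar>x + r * (y - x) - c\<bar> < e"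
proof -
  have eq: "x + r * (y - x) - c = (1 - r) * (x - c) + r * (y - c)" by (simp add: algebra_simps)
  have "\<bar>(1 - r) * (x - c)\<bar> \<le> (1 - r) * \<bar>x - c\<bar>" using assms by (simp add: abs_mult)
  moreover have "\<bar>r * (y - c)\<bar> \<le> r * \<bar>y - c\<bar>" using assms by (simp add: abs_mult)
  moreover have "(1 - r) * \<bar>x - c\<bar> \<le> (1 - r) * max \<bar>x - c\<bar> \<bar>y - c\<bar>"
    using assms by (intro mult_left_mono) auto
  moreover have "r * \<bar>y - c\<bar> \<le> r * max \<bar>x - c\<bar> \<bar>y - c\<bar>"
    using assms by (intro mult_left_mono) auto
  moreover have "max \<bar>x - c\<bar> \<bar>y - c\<bar> < e" using assms by simp
  moreover have "(1 - r) * max \<bar>x - c\<bar> \<bar>y - c\<bar> + r * max \<bar>x - c\<bar> \<bar>y - c\<bar> = max \<bar>x - c\<bar> \<bar>y - c\<bar>"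
    by (simp add: algebra_simps)
  ultimately have "\<bar>(1 - r) * (x - c)\<bar> + \<bar>r * (y - c)\<bar> < e" by linarith
  thus ?thesis unfolding eq using abs_triangle_ineq order_le_less_trans by blast
qed

lemma convex_nbhd:
  assumes P: "openin (cube_top n) P" and z: "z \<in> P"
  shows "\<exists>B. openin (cube_top n) B \<and> z \<in> B \<and> B \<subseteq> P \<and>
            (\<forall>u\<in>B. \<forall>w\<in>B. \<forall>r. 0 \<le> r \<and> r \<le> 1 \<longrightarrow> seg u w r \<in> B)"
proof -
  obtain U where U: "openin (powertop_real UNIV) U" "P = U \<inter> cube n"
    using P unfolding cube_top_def openin_subtopology by blast
  have zU: "z \<in> U" using z U(2) by blast
  obtain Xs where Xs: "z \<in> (\<Pi>\<^sub>E i\<in>UNIV. Xs i)" "\<forall>i. open (Xs i)" "finite {i. Xs i \<noteq> UNIV}"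
      "(\<Pi>\<^sub>E i\<in>UNIV. Xs i) \<subseteq> U"
    using product_topology_open_contains_basis[OF U(1) zU] by auto
  define F where "F = {i. Xs i \<noteq> UNIV}"
  have "\<forall>i. \<exists>d>0. ball (z i) d \<subseteq> Xs i"
  proof
    fix i
    have "z i \<in> Xs i" using Xs(1) by auto
    thus "\<exists>d>0. ball (z i) d \<subseteq> Xs i" using Xs(2) open_contains_ball by blast
  qed
  then obtain d where d: "\<And>i. d i > 0" "\<And>i. ball (z i) (d i) \<subseteq> Xs i" by metis
  define e where "e = Min (insert 1 (d ` F))"
  have finF: "finite F" using Xs(3) unfolding F_def .
  have epos: "e > 0" unfolding e_def using finF d(1) by (subst Min_gr_iff) auto
  have ele: "e \<le> d i" if "i \<in> F" for i unfolding e_def using finF that by (intro Min_le) auto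
  define Ys where "Ys = (\<lambda>i. if i \<in> F then ball (z i) e else UNIV)"
  define B where "B = (\<Pi>\<^sub>E i\<in>UNIV. Ys i) \<inter> cube n"
  have "openin (powertop_real UNIV) (\<Pi>\<^sub>E i\<in>UNIV. Ys i)"
  proof (rule product_topology_basis)
    show "\<And>i. openin euclideanreal (Ys i)" unfolding Ys_def by auto
    have "{i. Ys i \<noteq> topspace euclideanreal} \<subseteq> F" unfolding Ys_def by auto
    thus "finite {i. Ys i \<noteq> topspace euclideanreal}" using finF finite_subset by blast
  qed
  hence Bopen: "openin (cube_top n) B" unfolding B_def cube_top_def openin_subtopology by blast
  have zB: "z \<in> B" unfolding B_def Ys_def using z U(2) epos by (auto simp: PiE_UNIV_domain)
  have "Ys i \<subseteq> Xs i" for i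
  proof (cases "i \<in> F")
    case True
    hence "ball (z i) e \<subseteq> ball (z i) (d i)" using ele[OF True] by (simp add: subset_ball)
    thus ?thesis using d(2)[of i] True unfolding Ys_def by auto
  next
    case False thus ?thesis unfolding Ys_def F_def by auto
  qed
  hence "(\<Pi>\<^sub>E i\<in>UNIV. Ys i) \<subseteq> (\<Pi>\<^sub>E i\<in>UNIV. Xs i)" by (auto simp: PiE_UNIV_domain)
  hence BP: "B \<subseteq> P" unfolding B_def U(2) using Xs(4) by blast
  have conv: "seg u w r \<in> B" if uw: "u \<in> B" "w \<in> B" and r: "0 \<le> r" "r \<le> 1" for u w r
  proof -
    have "seg u w r \<in> cube n" using seg_in_cube uw r unfolding B_def by blast
    moreover have "seg u w r i \<in> Ys i" for i
    proof (cases "i \<in> F")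
      case True
      have "u i \<in> ball (z i) e" "w i \<in> ball (z i) e"
        using uw True unfolding B_def Ys_def by (auto simp: PiE_UNIV_domain Pi_iff split: if_splits dest!: spec[of _ i])
      hence "\<bar>u i - z i\<bar> < e" "\<bar>w i - z i\<bar> < e" by (auto simp: dist_real_def abs_minus_commute)
      hence "\<bar>u i + r * (w i - u i) - z i\<bar> < e" using abs_conv r by blast
      thus ?thesis using True unfolding Ys_def seg_def by (simp add: dist_real_def abs_minus_commute)
    next
      case False thus ?thesis unfolding Ys_def by simp
    qed
    ultimately show ?thesis unfolding B_def by (auto simp: PiE_UNIV_domain)
  qed
  show ?thesis using Bopen zB BP conv by blast
qed



lemma fst_box1: "fst box1 = top_of_set {0..1}" by (simp add: box1_def)

lemma char_stream:
  assumes x: "x \<in> X n"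
  shows "stream_map (boxn n) (real_top X act, segC (SR X act)) (char_map X act n x)"
  unfolding stream_map_def fst_conv snd_conv
proof (intro conjI allI impI)
  let ?ch = "char_map X act n x"
  have fb: "fst (boxn n) = cube_top n" unfolding boxn_def by (rule fst_conv)
  have cc: "continuous_map (cube_top n) (real_top X act) ?ch" using char_cont[of x X n act, OF x] .
  thus "continuous_map (fst (boxn n)) (real_top X act) ?ch" unfolding fb .
  fix V s t
  assume V: "openin (real_top X act) V"
    and st: "(s, t) \<in> snd (boxn n) (topspace (fst (boxn n)) \<inter> ?ch -` V)"
  define P where "P = topspace (cube_top n) \<inter> ?ch -` V"
  have "openin (cube_top n) {t \<in> topspace (cube_top n). ?ch t \<in> V}"
    using openin_continuous_map_preimage[OF cc V] .
  moreover have "{t \<in> topspace (cube_top n). ?ch t \<in> V} = P" unfolding P_def by auto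
  ultimately have Popen: "openin (cube_top n) P" by simp
  have "(s, t) \<in> snd (boxn n) P" using st unfolding fb P_def .
  moreover have "snd (boxn n) P = \<Union>{C P | C. is_circulation (cube_top n) C \<and>
                       (\<forall>i<n. stream_map (cube_top n, C) box1 (\<lambda>t. t i))}"
    unfolding boxn_def snd_conv using Popen by (simp only: if_True)
  ultimately have "(s, t) \<in> \<Union>{C P | C. is_circulation (cube_top n) C \<and>
                       (\<forall>i<n. stream_map (cube_top n, C) box1 (\<lambda>t. t i))}" by (simp only:)
  then obtain Z where "Z \<in> {C P | C. is_circulation (cube_top n) C \<and>
                       (\<forall>i<n. stream_map (cube_top n, C) box1 (\<lambda>t. t i))}" "(s, t) \<in> Z"
    by (rule UnionE)
  then obtain C where C: "is_circulation (cube_top n) C" "\<forall>i<n. stream_map (cube_top n, C) box1 (\<lambda>t. t i)"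
      "(s, t) \<in> C P"
    by blast
  define Os where "Os = {B. openin (cube_top n) B \<and> B \<subseteq> P \<and>
            (\<forall>u\<in>B. \<forall>w\<in>B. \<forall>r. 0 \<le> r \<and> r \<le> 1 \<longrightarrow> seg u w r \<in> B)}"
  have UOs: "\<Union>Os = P"
  proof
    show "\<Union>Os \<subseteq> P" unfolding Os_def by (rule Union_least) simp
    show "P \<subseteq> \<Union>Os"
    proof
      fix z assume z: "z \<in> P"
      from convex_nbhd[OF Popen z] obtain B where B: "openin (cube_top n) B \<and> z \<in> B \<and> B \<subseteq> P \<and>
            (\<forall>u\<in>B. \<forall>w\<in>B. \<forall>r. 0 \<le> r \<and> r \<le> 1 \<longrightarrow> seg u w r \<in> B)" ..
      have "B \<in> Os" unfolding Os_def using B by simp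
      moreover have "z \<in> B" using B by simp
      ultimately show "z \<in> \<Union>Os" by (rule UnionI)
    qed
  qed
  have oOs: "\<forall>V\<in>Os. openin (cube_top n) V" unfolding Os_def by simp
  have loc: "\<forall>Os. (\<forall>V\<in>Os. openin (cube_top n) V) \<longrightarrow> C (\<Union>Os) = Id_on (\<Union>Os) \<union> (\<Union>V\<in>Os. C V)\<^sup>+"
    using C(1) unfolding is_circulation_def by (rule conjunct2)
  have CP: "C P = Id_on P \<union> (\<Union>B\<in>Os. C B)\<^sup>+"
    using loc[THEN spec[of _ Os], THEN mp, OF oOs] unfolding UOs .
  define Rel where "Rel = {(a, b). (?ch a, ?ch b) \<in> segC (SR X act) V}"
  have trR: "trans Rel" unfolding trans_def
  proof (intro allI impI)
    fix a b c assume "(a, b) \<in> Rel" "(b, c) \<in> Rel"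
    hence "(?ch a, ?ch b) \<in> segC (SR X act) V" "(?ch b, ?ch c) \<in> segC (SR X act) V" unfolding Rel_def by auto
    hence "(?ch a, ?ch c) \<in> segC (SR X act) V" using segC_trans[of "SR X act" V] unfolding trans_def by blast
    thus "(a, c) \<in> Rel" unfolding Rel_def by simp
  qed
  have step: "(a, b) \<in> Rel" if B: "B \<in> Os" and ab: "(a, b) \<in> C B" for B a b
  proof -
    have Bo: "openin (cube_top n) B" and BP: "B \<subseteq> P"
      and Bc: "\<forall>u\<in>B. \<forall>w\<in>B. \<forall>r. 0 \<le> r \<and> r \<le> 1 \<longrightarrow> seg u w r \<in> B"
      using B unfolding Os_def by auto
    have c1: "\<forall>V. openin (cube_top n) V \<longrightarrow> C V \<subseteq> V \<times> V \<and> (\<forall>x\<in>V. (x, x) \<in> C V) \<and> trans (C V)"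
      using C(1) unfolding is_circulation_def by (rule conjunct1)
    have "C B \<subseteq> B \<times> B" using c1[rule_format, OF Bo] by (rule conjunct1)
    hence aB: "a \<in> B" and bB: "b \<in> B" using ab by auto
    have cubeo: "openin (cube_top n) (cube n)" using openin_topspace[of "cube_top n"] by simp
    have Bcube: "B \<subseteq> cube n" using openin_subset[OF Bo] by simp
    have "C B \<subseteq> C (cube n)" by (rule circ_mono[OF C(1) cubeo Bo Bcube])
    hence ab': "(a, b) \<in> C (cube n)" using ab by blast
    have le: "a i \<le> b i" if i: "i < n" for i
    proof -
      have sm: "stream_map (cube_top n, C) box1 (\<lambda>t. t i)" using C(2) i by blast
      have o01: "openin (top_of_set {0..1::real}) {0..1}"
        using openin_topspace[of "top_of_set {0..1::real}"] by simp
      have eq: "topspace (cube_top n) \<inter> (\<lambda>t. t i) -` {0..1} = cube n"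
        using i by (auto simp: cube_def)
      have h: "\<forall>V. openin (top_of_set {0..1}) V \<longrightarrow> (\<forall>x y. (x, y) \<in> C (topspace (cube_top n) \<inter> (\<lambda>t. t i) -` V) \<longrightarrow> (x i, y i) \<in> snd box1 V)"
        using sm unfolding stream_map_def fst_conv snd_conv fst_box1 by (rule conjunct2)
      have "(a, b) \<in> C (topspace (cube_top n) \<inter> (\<lambda>t. t i) -` {0..1})" using ab' by (simp only: eq)
      hence "(a i, b i) \<in> snd box1 {0..1}" by (rule h[rule_format, OF o01])
      thus ?thesis unfolding box1_def by simp
    qed
    define q where "q = ?ch \<circ> seg a b"
    have aC: "a \<in> cube n" and bC: "b \<in> cube n" using aB bB Bcube by auto
    have "q \<in> SR X act" unfolding q_def SR_def
      by (rule CollectI, rule exI[of _ n], rule exI[of _ x], rule exI[of _ a], rule exI[of _ b])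
         (use x aC bC le in simp)
    moreover have "q ` {0..1} \<subseteq> V"
    proof
      fix y assume "y \<in> q ` {0..1}"
      then obtain r where r: "r \<in> {0..1}" "y = q r" by blast
      have "seg a b r \<in> B" using Bc aB bB r by simp
      hence "seg a b r \<in> P" using BP by (rule subsetD[rotated])
      thus "y \<in> V" unfolding q_def P_def r(2) by simp
    qed
    ultimately have "(q 0, q 1) \<in> segH (SR X act) V" unfolding segH_def
      by (intro CollectI exI[of _ q]) simp
    hence "(q 0, q 1) \<in> segC (SR X act) V" unfolding segC_def by (simp add: r_into_trancl')
    thus ?thesis unfolding Rel_def q_def by simp
  qed
  have "(\<Union>B\<in>Os. C B) \<subseteq> Rel"
  proof
    fix z assume "z \<in> (\<Union>B\<in>Os. C B)"
    then obtain B where "B \<in> Os" "z \<in> C B" by blast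
    thus "z \<in> Rel" using step[of B "fst z" "snd z"] by simp
  qed
  hence "(\<Union>B\<in>Os. C B)\<^sup>+ \<subseteq> Rel\<^sup>+" by (rule trancl_mono_subset)
  also have "\<dots> = Rel" by (rule trancl_id[OF trR])
  finally have T: "(\<Union>B\<in>Os. C B)\<^sup>+ \<subseteq> Rel" .
  have I: "Id_on P \<subseteq> Rel"
  proof
    fix z assume "z \<in> Id_on P"
    then obtain a where a: "z = (a, a)" "a \<in> P" by (auto simp: Id_on_def)
    hence "?ch a \<in> V" unfolding P_def by simp
    hence "(?ch a, ?ch a) \<in> segC (SR X act) V" unfolding segC_def by (intro UnI1 Id_onI)
    thus "z \<in> Rel" unfolding Rel_def a(1) by simp
  qed
  have "Id_on P \<union> (\<Union>B\<in>Os. C B)\<^sup>+ \<subseteq> Rel" using I T by (rule Un_least)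
  hence "(s, t) \<in> Rel" using C(3) unfolding CP by (rule subsetD)
  thus "(?ch s, ?ch t) \<in> segC (SR X act) V" unfolding Rel_def by simp
qed

lemma inter_sub:
  assumes "openin (real_top X act) V"
  shows "snd (stream_realization X act) V \<subseteq> segC (SR X act) V"
proof -
  have "segC (SR X act) V \<in> {C V | C. is_circulation (real_top X act) C \<and>
                 (\<forall>n x. x \<in> X n \<longrightarrow> stream_map (boxn n) (real_top X act, C) (char_map X act n x))}"
  proof -
    have "is_circulation (real_top X act) (segC (SR X act)) \<and>
                 (\<forall>n x. x \<in> X n \<longrightarrow> stream_map (boxn n) (real_top X act, segC (SR X act)) (char_map X act n x))"
      by (simp add: real_circ char_stream)
    thus ?thesis by (intro CollectI exI[of _ "segC (SR X act)"] conjI[OF refl])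
  qed
  hence "\<Inter>{C V | C. is_circulation (real_top X act) C \<and>
                 (\<forall>n x. x \<in> X n \<longrightarrow> stream_map (boxn n) (real_top X act, C) (char_map X act n x))} \<subseteq> segC (SR X act) V"
    by (rule Inter_lower)
  thus ?thesis unfolding stream_realization_def snd_conv using assms by (simp only: if_True)
qed



definition dp :: "'b topology \<Rightarrow> 'b circ \<Rightarrow> 'b \<Rightarrow> 'b \<Rightarrow> 'b set \<Rightarrow> bool" where
  "dp T R x y V \<longleftrightarrow> (\<exists>\<gamma>. stream_map box1 (T, R) \<gamma> \<and> \<gamma> 0 = x \<and> \<gamma> 1 = y \<and> \<gamma> ` {0..1} \<subseteq> V)"

lemma box1_rel: "(a, b) \<in> snd box1 A \<longleftrightarrow> a \<le> b \<and> {a..b} \<subseteq> A"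
  unfolding box1_def by simp

lemma stream_map_box1I:
  assumes "continuous_map (top_of_set {0..1}) T g"
    and "\<And>W a b. openin T W \<Longrightarrow> a \<le> b \<Longrightarrow> {a..b} \<subseteq> {0..1} \<inter> g -` W \<Longrightarrow> (g a, g b) \<in> R W"
  shows "stream_map box1 (T, R) g"
  unfolding stream_map_def fst_conv snd_conv fst_box1 using assms
  by (simp add: box1_rel)

lemma stream_map_box1D:
  assumes "stream_map box1 (T, R) g" "openin T W" "a \<le> b" "{a..b} \<subseteq> {0..1} \<inter> g -` W"
  shows "(g a, g b) \<in> R W"
  using assms unfolding stream_map_def fst_conv snd_conv fst_box1 by (simp add: box1_rel)

lemma stream_map_box1_cont:
  "stream_map box1 (T, R) g \<Longrightarrow> continuous_map (top_of_set {0..1}) T g"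
  unfolding stream_map_def fst_conv fst_box1 by simp

lemma dp_const:
  assumes refl: "\<And>W w. openin T W \<Longrightarrow> w \<in> W \<Longrightarrow> (w, w) \<in> R W"
    and x: "x \<in> topspace T" "x \<in> V"
  shows "dp T R x x V"
  unfolding dp_def
proof (intro exI conjI)
  show "stream_map box1 (T, R) (\<lambda>_. x)"
  proof (rule stream_map_box1I)
    show "continuous_map (top_of_set {0..1}) T (\<lambda>_. x)" using x(1) by simp
    fix W and a b :: real assume W: "openin T W" and ab: "a \<le> b" "{a..b} \<subseteq> {0..1} \<inter> (\<lambda>_. x) -` W"
    have "a \<in> {a..b}" using ab(1) by simp
    hence "x \<in> W" using ab(2) by blast
    thus "(x, x) \<in> R W" using refl W by blast
  qed
qed (use x in auto)

lemma dp_concat: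
  assumes tr: "\<And>W. openin T W \<Longrightarrow> trans (R W)"
    and xy: "dp T R x y V" and yz: "dp T R y z V"
  shows "dp T R x z V"
proof -
  obtain g1 where g1: "stream_map box1 (T, R) g1" "g1 0 = x" "g1 1 = y" "g1 ` {0..1} \<subseteq> V"
    using xy unfolding dp_def by blast
  obtain g2 where g2: "stream_map box1 (T, R) g2" "g2 0 = y" "g2 1 = z" "g2 ` {0..1} \<subseteq> V"
    using yz unfolding dp_def by blast
  define g where "g = (\<lambda>r::real. if r \<le> 1/2 then g1 (2 * r) else g2 (2 * r - 1))"
  have c1: "continuous_map (top_of_set {0..1}) T g1" by (rule stream_map_box1_cont[OF g1(1)])
  have c2: "continuous_map (top_of_set {0..1}) T g2" by (rule stream_map_box1_cont[OF g2(1)])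
  have lo: "g r = g1 (2 * r)" if "r \<le> 1/2" for r using that unfolding g_def by simp
  have hi: "g r = g2 (2 * r - 1)" if "1/2 \<le> r" for r
  proof (cases "r = 1/2")
    case True thus ?thesis unfolding g_def True using g1(3) g2(2) by simp
  next
    case False thus ?thesis using that unfolding g_def by simp
  qed
  have cont: "continuous_map (top_of_set {0..1}) T g"
    unfolding g_def
  proof (rule continuous_map_cases_le[where p="\<lambda>r. r" and q="\<lambda>r. 1/2"])
    show "continuous_map (top_of_set {0..1}) euclideanreal (\<lambda>r. r)" by simp
    show "continuous_map (top_of_set {0..1}) euclideanreal (\<lambda>r. 1/2)" by simp
    have "continuous_map (subtopology (top_of_set {0..1}) {r \<in> topspace (top_of_set {0..1}). r \<le> 1 / 2})
            (top_of_set {0..1}) (\<lambda>r::real. 2 * r)"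
      unfolding subtopology_subtopology continuous_map_subtopology_eu
      by (auto intro!: continuous_intros)
    thus "continuous_map (subtopology (top_of_set {0..1}) {r \<in> topspace (top_of_set {0..1}). r \<le> 1 / 2}) T (\<lambda>r. g1 (2 * r))"
      using continuous_map_compose[OF _ c1] unfolding o_def by blast
    have "continuous_map (subtopology (top_of_set {0..1}) {r \<in> topspace (top_of_set {0..1}). 1 / 2 \<le> r})
            (top_of_set {0..1}) (\<lambda>r::real. 2 * r - 1)"
      unfolding subtopology_subtopology continuous_map_subtopology_eu
      by (auto intro!: continuous_intros)
    thus "continuous_map (subtopology (top_of_set {0..1}) {r \<in> topspace (top_of_set {0..1}). 1 / 2 \<le> r}) T (\<lambda>r. g2 (2 * r - 1))"
      using continuous_map_compose[OF _ c2] unfolding o_def by blast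
    fix r :: real assume r: "r = 1 / 2"
    have "2 * r = 1" using r by simp
    thus "g1 (2 * r) = g2 (2 * r - 1)" using g1(3) g2(2) by simp
  qed
  have lowpart: "(g a, g b) \<in> R W"
    if W: "openin T W" and ab: "a \<le> b" "b \<le> 1/2" "{a..b} \<subseteq> {0..1} \<inter> g -` W" for W a b
  proof -
    have "{2 * a..2 * b} \<subseteq> {0..1} \<inter> g1 -` W"
    proof
      fix r assume r: "r \<in> {2 * a..2 * b}"
      hence "r / 2 \<in> {a..b}" by auto
      hence "r / 2 \<in> {0..1} \<inter> g -` W" using ab(3) by blast
      moreover have "g (r / 2) = g1 r" using lo[of "r/2"] r ab(2) by auto
      ultimately show "r \<in> {0..1} \<inter> g1 -` W" using r ab(2) by auto
    qed
    hence "(g1 (2 * a), g1 (2 * b)) \<in> R W" using stream_map_box1D[OF g1(1) W] ab(1) by simp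
    thus ?thesis using lo[of a] lo[of b] ab by simp
  qed
  have highpart: "(g a, g b) \<in> R W"
    if W: "openin T W" and ab: "a \<le> b" "1/2 \<le> a" "{a..b} \<subseteq> {0..1} \<inter> g -` W" for W a b
  proof -
    have "{2 * a - 1..2 * b - 1} \<subseteq> {0..1} \<inter> g2 -` W"
    proof
      fix r assume r: "r \<in> {2 * a - 1..2 * b - 1}"
      hence "(r + 1) / 2 \<in> {a..b}" by auto
      hence "(r + 1) / 2 \<in> {0..1} \<inter> g -` W" using ab(3) by blast
      moreover have "g ((r + 1) / 2) = g2 r"
      proof -
        have e: "2 * ((r + 1) / 2) - 1 = r" by (simp add: field_simps)
        have "1/2 \<le> (r + 1) / 2" using r ab(2) by auto
        from hi[OF this] show ?thesis unfolding e .
      qed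
      ultimately show "r \<in> {0..1} \<inter> g2 -` W" using r ab(2) by auto
    qed
    hence "(g2 (2 * a - 1), g2 (2 * b - 1)) \<in> R W" using stream_map_box1D[OF g2(1) W] ab(1) by simp
    thus ?thesis using hi[of a] hi[of b] ab by simp
  qed
  have sm: "stream_map box1 (T, R) g"
  proof (rule stream_map_box1I[OF cont])
    fix W a b assume W: "openin T W" and ab: "a \<le> b" "{a..b} \<subseteq> {0..1} \<inter> g -` W"
    show "(g a, g b) \<in> R W"
    proof (cases "b \<le> 1/2")
      case True thus ?thesis using lowpart[OF W ab(1) True ab(2)] by simp
    next
      case b: False
      show ?thesis
      proof (cases "1/2 \<le> a")
        case True thus ?thesis using highpart[OF W ab(1) True ab(2)] by simp
      next
        case a: False
        have "{a..1/2} \<subseteq> {a..b}" "{1/2..b} \<subseteq> {a..b}" using a b by auto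
        hence s1: "{a..1/2} \<subseteq> {0..1} \<inter> g -` W" and s2: "{1/2..b} \<subseteq> {0..1} \<inter> g -` W"
          using ab(2) by blast+
        have "a \<le> 1/2" "(1::real)/2 \<le> 1/2" "1/2 \<le> b" using a b by auto
        hence "(g a, g (1/2)) \<in> R W" "(g (1/2), g b) \<in> R W"
          using lowpart[OF W _ _ s1] highpart[OF W _ _ s2] by auto
        thus ?thesis using tr[OF W] unfolding trans_def by blast
      qed
    qed
  qed
  have img: "g ` {0..1} \<subseteq> V"
  proof
    fix y assume "y \<in> g ` {0..1}"
    then obtain r where r: "r \<in> {0..1}" "y = g r" by blast
    show "y \<in> V"
    proof (cases "r \<le> 1/2")
      case True
      hence "y = g1 (2 * r)" using lo r(2) by simp
      moreover have "2 * r \<in> {0..1}" using True r(1) by auto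
      ultimately show ?thesis using g1(4) by blast
    next
      case False
      hence "y = g2 (2 * r - 1)" using hi r(2) by simp
      moreover have "2 * r - 1 \<in> {0..1}" using False r(1) by auto
      ultimately show ?thesis using g2(4) by blast
    qed
  qed
  have "g 0 = x" using lo[of 0] g1(2) by simp
  moreover have "g 1 = z" using hi[of 1] g2(3) by simp
  ultimately show ?thesis unfolding dp_def using sm img by blast
qed



lemma fst_boxn: "fst (boxn n) = cube_top n" unfolding boxn_def by (rule fst_conv)

lemma R0_eq:
  assumes "openin (real_top X act) W"
  shows "snd (stream_realization X act) W = \<Inter>{C W | C. is_circulation (real_top X act) C \<and>
                 (\<forall>n x. x \<in> X n \<longrightarrow> stream_map (boxn n) (real_top X act, C) (char_map X act n x))}"
  unfolding stream_realization_def snd_conv using assms by (simp only: if_True)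

lemma R0_refl:
  assumes W: "openin (real_top X act) W" and w: "w \<in> W"
  shows "(w, w) \<in> snd (stream_realization X act) W"
  unfolding R0_eq[OF W]
proof (rule InterI)
  fix Z assume "Z \<in> {C W | C. is_circulation (real_top X act) C \<and>
                 (\<forall>n x. x \<in> X n \<longrightarrow> stream_map (boxn n) (real_top X act, C) (char_map X act n x))}"
  then obtain C where C: "Z = C W" "is_circulation (real_top X act) C" by blast
  have "\<forall>x\<in>W. (x, x) \<in> C W" using C(2) W unfolding is_circulation_def by blast
  thus "(w, w) \<in> Z" using w C(1) by blast
qed

lemma R0_trans:
  assumes W: "openin (real_top X act) W"
  shows "trans (snd (stream_realization X act) W)"
  unfolding R0_eq[OF W] trans_def
proof (intro allI impI InterI)
  fix x y z Z
  assume xy: "(x, y) \<in> \<Inter>{C W | C. is_circulation (real_top X act) C \<and>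
                 (\<forall>n x. x \<in> X n \<longrightarrow> stream_map (boxn n) (real_top X act, C) (char_map X act n x))}"
    and yz: "(y, z) \<in> \<Inter>{C W | C. is_circulation (real_top X act) C \<and>
                 (\<forall>n x. x \<in> X n \<longrightarrow> stream_map (boxn n) (real_top X act, C) (char_map X act n x))}"
    and Z: "Z \<in> {C W | C. is_circulation (real_top X act) C \<and>
                 (\<forall>n x. x \<in> X n \<longrightarrow> stream_map (boxn n) (real_top X act, C) (char_map X act n x))}"
  have "(x, y) \<in> Z" "(y, z) \<in> Z" using xy yz Z by (blast, blast)
  moreover obtain C where C: "Z = C W" "is_circulation (real_top X act) C" using Z by blast
  have "trans (C W)" using C(2) W unfolding is_circulation_def by blast
  ultimately show "(x, z) \<in> Z" using C(1) unfolding trans_def by blast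
qed

lemma SR_stream:
  assumes p: "p \<in> SR X act"
  shows "stream_map box1 (real_top X act, snd (stream_realization X act)) p"
proof (rule stream_map_box1I[OF SR_cont[OF p]])
  obtain n x u w where pp: "p = char_map X act n x \<circ> seg u w" "x \<in> X n" "u \<in> cube n" "w \<in> cube n" "\<forall>i<n. u i \<le> w i"
    using p unfolding SR_def by blast
  let ?ch = "char_map X act n x"
  fix W a b assume W: "openin (real_top X act) W" and ab: "a \<le> b" "{a..b} \<subseteq> {0..1} \<inter> p -` W"
  have a01: "0 \<le> a" "b \<le> 1" using ab by auto
  define s where "s = seg u w a"
  define t where "t = seg u w b"
  have sC: "s \<in> cube n" and tC: "t \<in> cube n" unfolding s_def t_def using seg_in_cube[OF pp(3,4)] a01 ab(1) by auto
  have st_le: "\<forall>i<n. s i \<le> t i" unfolding s_def t_def using seg_mono pp(5) ab(1) by blast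
  define Pw where "Pw = topspace (cube_top n) \<inter> ?ch -` W"
  have cc: "continuous_map (cube_top n) (real_top X act) ?ch" using char_cont[of x X n act, OF pp(2)] .
  have "openin (cube_top n) {t \<in> topspace (cube_top n). ?ch t \<in> W}"
    using openin_continuous_map_preimage[OF cc W] .
  moreover have "{t \<in> topspace (cube_top n). ?ch t \<in> W} = Pw" unfolding Pw_def by auto
  ultimately have Pwo: "openin (cube_top n) Pw" by simp
  have segS: "seg s t \<in> Scube n" unfolding Scube_def using sC tC st_le by blast
  have segI: "seg s t ` {0..1} \<subseteq> Pw"
  proof
    fix y assume "y \<in> seg s t ` {0..1}"
    then obtain r where r: "r \<in> {0..1}" "y = seg s t r" by blast
    have y: "y = seg u w (a + r * (b - a))" unfolding r(2) s_def t_def by (simp add: seg_restr)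
    have "r * (b - a) \<le> b - a" using r(1) ab(1) by (simp add: mult_left_le_one_le)
    hence inab: "a + r * (b - a) \<in> {a..b}" using r(1) ab(1) by auto
    hence "a + r * (b - a) \<in> {0..1} \<inter> p -` W" using ab(2) by blast
    hence "?ch y \<in> W" and "a + r * (b - a) \<in> {0..1}" unfolding y pp(1) by auto
    moreover have "y \<in> cube n" unfolding y using seg_in_cube[OF pp(3,4)] \<open>a + r * (b - a) \<in> {0..1}\<close> by auto
    ultimately show "y \<in> Pw" unfolding Pw_def by simp
  qed
  have "(s, t) \<in> segH (Scube n) Pw" unfolding segH_def
    using segS segI by (intro CollectI exI[of _ "seg s t"]) simp
  hence "(s, t) \<in> segC (Scube n) Pw" unfolding segC_def by (simp add: r_into_trancl')
  hence stb: "(s, t) \<in> snd (boxn n) Pw" using boxn_contains[OF Pwo] by blast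
  show "(p a, p b) \<in> snd (stream_realization X act) W"
    unfolding R0_eq[OF W]
  proof (rule InterI)
    fix Z assume "Z \<in> {C W | C. is_circulation (real_top X act) C \<and>
                 (\<forall>n x. x \<in> X n \<longrightarrow> stream_map (boxn n) (real_top X act, C) (char_map X act n x))}"
    then obtain C where C: "Z = C W" "\<forall>n x. x \<in> X n \<longrightarrow> stream_map (boxn n) (real_top X act, C) (char_map X act n x)"
      by blast
    have sm: "stream_map (boxn n) (real_top X act, C) ?ch" using C(2) pp(2) by blast
    have h: "\<forall>V. openin (real_top X act) V \<longrightarrow> (\<forall>x y. (x, y) \<in> snd (boxn n) (topspace (cube_top n) \<inter> ?ch -` V) \<longrightarrow> (?ch x, ?ch y) \<in> C V)"
      using sm unfolding stream_map_def fst_conv snd_conv fst_boxn by (rule conjunct2)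
    have "(?ch s, ?ch t) \<in> C W" using h[rule_format, OF W] stb unfolding Pw_def by blast
    thus "(p a, p b) \<in> Z" unfolding C(1) pp(1) s_def t_def by simp
  qed
qed

theorem mainTheorem9:
  fixes X :: "nat \<Rightarrow> 'a set"
    and act :: "nat \<Rightarrow> nat \<Rightarrow> (bool list \<Rightarrow> bool list) \<Rightarrow> 'a \<Rightarrow> 'a"
  assumes "precubical X act"
  shows "path_ordered (stream_realization X act)"
  unfolding path_ordered_def
proof (intro allI impI, elim conjE)
  let ?T = "real_top X act" and ?R = "snd (stream_realization X act)"
  have fstS: "fst (stream_realization X act) = ?T" unfolding stream_realization_def by simp
  fix V x y
  assume V: "openin (fst (stream_realization X act)) V" and xy: "(x, y) \<in> ?R V"
  have Vo: "openin ?T V" using V unfolding fstS .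
  have "(x, y) \<in> segC (SR X act) V" using xy inter_sub[OF Vo] by blast
  hence "dp ?T ?R x y V"
    unfolding segC_def
  proof (elim UnE)
    assume "(x, y) \<in> Id_on V"
    hence "y = x" "x \<in> V" by (auto simp: Id_on_def)
    moreover have "x \<in> topspace ?T" using \<open>x \<in> V\<close> openin_subset[OF Vo] by blast
    ultimately show ?thesis using dp_const[of ?T ?R x V] R0_refl by blast
  next
    assume "(x, y) \<in> (segH (SR X act) V)\<^sup>+"
    thus ?thesis
    proof (induction rule: trancl_induct)
      case (base y)
      then obtain p where p: "(x, y) = (p 0, p 1)" "p \<in> SR X act" "p ` {0..1} \<subseteq> V"
        unfolding segH_def by blast
      show ?case unfolding dp_def using SR_stream[OF p(2)] p(1,3) by auto
    next
      case (step y z)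
      then obtain p where p: "(y, z) = (p 0, p 1)" "p \<in> SR X act" "p ` {0..1} \<subseteq> V"
        unfolding segH_def by blast
      have "dp ?T ?R y z V" unfolding dp_def using SR_stream[OF p(2)] p(1,3) by auto
      thus ?case using dp_concat[OF R0_trans step.IH] by blast
    qed
  qed
  thus "\<exists>\<gamma>. stream_map box1 (stream_realization X act) \<gamma> \<and> \<gamma> 0 = x \<and> \<gamma> 1 = y \<and> \<gamma> ` {0..1} \<subseteq> V"
    unfolding dp_def
    by (metis prod.collapse fstS)
qed


end
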